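(* Let $L_x, L_y > 0$ and $\mathcal{D} = (0,L_x)\times(0,L_y)$. For non-negative integers $m,n$ with $(m,n)\neq(0,0)$ let $\Phi_{mn}(x,y) = \cos(m\pi x/L_x)\cos(n\pi y/L_y)$ (up to a positive normalisation constant), with wavenumber $k_{mn} = \sqrt{(m\pi/L_x)^2 + (n\pi/L_y)^2}$, so that $-\Delta\Phi_{mn} = k_{mn}^2\Phi_{mn}$ in $\mathcal{D}$ and $\bm{n}\cdot\nabla\Phi_{mn} = 0$ on $\partial\mathcal{D}$. For $h>0$ let $\omega_{mn}(h) = \sqrt{k_{mn}\tanh(k_{mn} h)}$. Then there do not exist three such modes $\Psi_j = \Phi_{m_j n_j}$ ($j=1,2,3$), with wavenumbers $K_j = k_{m_j n_j}$ and frequencies $\Omega_j = \omega_{m_j n_j}$, together with a depth $h_c \in (0,\infty)$, such that both $\iint_{\mathcal{D}} \Psi_1\Psi_2\Psi_3\,\mathrm{d}A \neq 0$ and $\Omega_1(h_c) + \Omega_2(h_c) = \Omega_3(h_c)$. That is, resonant triads cannot exist in a rectangular cylinder of finite depth.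
   Context: A resonant triad in a cylinder with cross-section $\mathcal{D}$ and dimensionless fluid depth $h$ consists of three Neumann Laplacian eigenmodes $\Psi_1,\Psi_2,\Psi_3$ on $\mathcal{D}$ with positive wavenumbers $K_j$ (i.e. $-\Delta\Psi_j = K_j^2\Psi_j$) such that the correlation condition $\iint_{\mathcal{D}}\Psi_1\Psi_2\Psi_3\,\mathrm{d}A\neq 0$ holds and, at some critical depth $h_c\in(0,\infty)$, the angular frequencies $\Omega_j = \sqrt{K_j\tanh(K_j h_c)}$ satisfy $\Omega_1+\Omega_2=\Omega_3$ (other sign combinations reduce to this one by relabelling). *)

theory Defs
  imports "HOL-Analysis.Analysis"
begin

definition Phi :: "real \<Rightarrow> real \<Rightarrow> nat \<Rightarrow> nat \<Rightarrow> real \<times> real \<Rightarrow> real" where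
  "Phi Lx Ly m n p = cos (real m * pi * fst p / Lx) * cos (real n * pi * snd p / Ly)"

definition wavenum :: "real \<Rightarrow> real \<Rightarrow> nat \<Rightarrow> nat \<Rightarrow> real" where
  "wavenum Lx Ly m n = sqrt ((real m * pi / Lx)\<^sup>2 + (real n * pi / Ly)\<^sup>2)"

definition omega :: "real \<Rightarrow> real \<Rightarrow> nat \<Rightarrow> nat \<Rightarrow> real \<Rightarrow> real" where
  "omega Lx Ly m n h = sqrt (wavenum Lx Ly m n * tanh (wavenum Lx Ly m n * h))"

end

theory Submission imports Defs begin
lemma tanh_aux_pos:
  fixes x :: real assumes "x > 0" shows "(1 - tanh x ^ 2) * x < tanh x"
proof -
  define g where "g t = tanh t - (1 - tanh t ^ 2) * t" for t :: real
  have der: "DERIV g t :> 2 * tanh t * (1 - tanh t ^ 2) * t" for t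
    unfolding g_def
    by (auto intro!: derivative_eq_intros simp: algebra_simps power2_eq_square)
  obtain z where z: "0 < z" "z < x" "g x - g 0 = (x - 0) * (2 * tanh z * (1 - tanh z ^ 2) * z)"
    using MVT2[OF assms, of g "\<lambda>t. 2 * tanh t * (1 - tanh t ^ 2) * t"] der by blast
  have "tanh z ^ 2 < 1"
    using tanh_real_bounds[of z] by (simp add: abs_square_less_1 abs_less_iff)
  hence "2 * tanh z * (1 - tanh z ^ 2) * z > 0" using z by simp
  hence "g x > 0" using z assms by (simp add: g_def)
  thus ?thesis by (simp add: g_def)
qed

lemma tanh_div_strict:
  fixes x y :: real assumes "0 < x" "x < y" shows "tanh y / y < tanh x / x"
proof -
  have "\<exists>d. DERIV (\<lambda>t. tanh t / t) t :> d \<and> d < 0" if "x \<le> t" "t \<le> y" for t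
  proof -
    have t: "t > 0" using that assms by simp
    have "DERIV (\<lambda>t. tanh t / t) t :> ((1 - tanh t ^ 2) * t - tanh t) / t^2"
      using t by (auto intro!: derivative_eq_intros simp: field_simps power2_eq_square)
    moreover have "((1 - tanh t ^ 2) * t - tanh t) / t^2 < 0"
      using tanh_aux_pos[OF t] t by (simp add: divide_neg_pos)
    ultimately show ?thesis by blast
  qed
  from DERIV_neg_imp_decreasing[OF assms(2) this] show ?thesis by simp
qed

definition ww :: "real \<Rightarrow> real \<Rightarrow> real" where "ww h k = sqrt (k * tanh (k * h))"

lemma ww_mono: assumes "h > 0" "0 \<le> a" "a \<le> b" shows "ww h a \<le> ww h b"
proof -
  have "tanh (a*h) \<le> tanh (b*h)" using assms by (simp add: mult_right_mono)
  moreover have "0 \<le> tanh (a*h)" using assms by simp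
  ultimately have "a * tanh (a*h) \<le> b * tanh (b*h)" using assms by (simp add: mult_mono)
  thus ?thesis unfolding ww_def by simp
qed

lemma ww_eq: assumes "h > 0" "k > 0" shows "ww h k = k * sqrt h * sqrt (tanh (k*h) / (k*h))"
proof -
  have "k * tanh (k*h) = (k^2 * h) * (tanh (k*h) / (k*h))" using assms by (simp add: field_simps power2_eq_square)
  hence "ww h k = sqrt (k^2) * sqrt h * sqrt (tanh (k*h) / (k*h))" unfolding ww_def by (metis real_sqrt_mult)
  thus ?thesis using assms by simp
qed

lemma ww_subadd: assumes "h > 0" "a > 0" "b > 0" shows "ww h (a+b) < ww h a + ww h b"
proof -
  let ?r = "\<lambda>t. sqrt (tanh t / t)"
  have 1: "?r ((a+b)*h) < ?r (a*h)" using tanh_div_strict[of "a*h" "(a+b)*h"] assms by (simp add: distrib_right)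
  have 2: "?r ((a+b)*h) < ?r (b*h)" using tanh_div_strict[of "b*h" "(a+b)*h"] assms by (simp add: distrib_right)
  have "ww h (a+b) = a * sqrt h * ?r ((a+b)*h) + b * sqrt h * ?r ((a+b)*h)"
    using ww_eq[of h "a+b"] assms by (simp add: algebra_simps)
  also have "\<dots> < a * sqrt h * ?r (a*h) + b * sqrt h * ?r (b*h)"
    using 1 2 assms by (intro add_strict_mono mult_strict_left_mono) auto
  also have "\<dots> = ww h a + ww h b" using ww_eq[of h a] ww_eq[of h b] assms by simp
  finally show ?thesis .
qed

lemma cos_int_integral:
  fixes L :: real and k :: int assumes "L > 0" "k \<noteq> 0"
  shows "((\<lambda>x. cos (of_int k * pi * x / L)) has_integral 0) {0..L}"
proof -
  define f where "f x = sin (of_int k * pi * x / L) * L / (of_int k * pi)" for x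
  have "\<And>x. x\<in>{0..L} \<Longrightarrow> (f has_vector_derivative cos (of_int k * pi * x / L)) (at x within {0..L})"
  proof -
    fix x :: real
    have "(f has_real_derivative cos (of_int k * pi * x / L)) (at x)"
      unfolding f_def using assms
      by (auto intro!: derivative_eq_intros simp: field_simps)
    thus "(f has_vector_derivative cos (of_int k * pi * x / L)) (at x within {0..L})"
      by (simp add: has_real_derivative_iff_has_vector_derivative has_vector_derivative_at_within)
  qed
  from fundamental_theorem_of_calculus[OF _ this] assms
  have "((\<lambda>x. cos (of_int k * pi * x / L)) has_integral (f L - f 0)) {0..L}" by simp
  moreover have "f L - f 0 = 0" unfolding f_def using assms
    by (simp add: mult.commute[of _ pi])
  ultimately show ?thesis by simp
qed

lemma cos3: "cos (A::real) * cos B * cos C = (cos (A+B-C) + cos (A-B+C) + cos (-A+B+C) + cos (A+B+C)) / 4"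
  by (simp add: cos_add cos_diff sin_add sin_diff algebra_simps)

lemma triple_zero:
  fixes L :: real and m1 m2 m3 :: nat assumes "L > 0" "m3 > m1 + m2"
  shows "integral {0..L} (\<lambda>x. cos (real m1 * pi * x / L) * cos (real m2 * pi * x / L) * cos (real m3 * pi * x / L)) = 0"
proof -
  define k1 where "k1 = int m1 + int m2 - int m3"
  define k2 where "k2 = int m1 - int m2 + int m3"
  define k3 where "k3 = - int m1 + int m2 + int m3"
  define k4 where "k4 = int m1 + int m2 + int m3"
  have nz: "k1 \<noteq> 0" "k2 \<noteq> 0" "k3 \<noteq> 0" "k4 \<noteq> 0" using assms(2) unfolding k1_def k2_def k3_def k4_def by auto
  have eq: "cos (real m1 * pi * x / L) * cos (real m2 * pi * x / L) * cos (real m3 * pi * x / L)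
    = (cos (of_int k1 * pi * x / L) + cos (of_int k2 * pi * x / L) + cos (of_int k3 * pi * x / L) + cos (of_int k4 * pi * x / L)) / 4" for x
    unfolding cos3 k1_def k2_def k3_def k4_def by (simp add: algebra_simps add_divide_distrib diff_divide_distrib)
  have "((\<lambda>x. (cos (of_int k1 * pi * x / L) + cos (of_int k2 * pi * x / L) + cos (of_int k3 * pi * x / L) + cos (of_int k4 * pi * x / L)) / 4) has_integral (0+0+0+0)/4) {0..L}"
    by (intro has_integral_divide has_integral_add cos_int_integral assms nz)
  from integral_unique[OF this] show ?thesis unfolding eq by simp
qed

lemma sep_integral:
  fixes Lx Ly :: real assumes "Lx > 0" "Ly > 0"
  shows "integral (box (0, 0) (Lx, Ly)) (\<lambda>p. Phi Lx Ly m1 n1 p * Phi Lx Ly m2 n2 p * Phi Lx Ly m3 n3 p)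
    = integral {0..Lx} (\<lambda>x. cos (real m1 * pi * x / Lx) * cos (real m2 * pi * x / Lx) * cos (real m3 * pi * x / Lx))
    * integral {0..Ly} (\<lambda>y. cos (real n1 * pi * y / Ly) * cos (real n2 * pi * y / Ly) * cos (real n3 * pi * y / Ly))"
proof -
  define X where "X x = cos (real m1 * pi * x / Lx) * cos (real m2 * pi * x / Lx) * cos (real m3 * pi * x / Lx)" for x
  define Y where "Y y = cos (real n1 * pi * y / Ly) * cos (real n2 * pi * y / Ly) * cos (real n3 * pi * y / Ly)" for y
  have feq: "(\<lambda>p. Phi Lx Ly m1 n1 p * Phi Lx Ly m2 n2 p * Phi Lx Ly m3 n3 p) = (\<lambda>p. X (fst p) * Y (snd p))"
    unfolding Phi_def X_def Y_def by (simp add: fun_eq_iff mult_ac)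
  have cont: "continuous_on (cbox (0, 0) (Lx, Ly)) (\<lambda>p::real\<times>real. X (fst p) * Y (snd p))"
    unfolding X_def Y_def using assms by (auto intro!: continuous_intros)
  have "integral (box (0, 0) (Lx, Ly)) (\<lambda>p. X (fst p) * Y (snd p))
      = integral (cbox (0, 0) (Lx, Ly)) (\<lambda>p. X (fst p) * Y (snd p))"
    by (rule integral_open_interval)
  also have "\<dots> = integral (cbox 0 Lx) (\<lambda>x. integral (cbox 0 Ly) (\<lambda>y. X x * Y y))"
    using integral_prod_continuous[OF cont] by simp
  also have "\<dots> = integral {0..Lx} X * integral {0..Ly} Y" by simp
  finally show ?thesis unfolding feq X_def Y_def .
qed

lemma wavenum_pos: assumes "Lx > 0" "Ly > 0" "(m, n) \<noteq> (0, 0)" shows "wavenum Lx Ly m n > 0"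
proof -
  have "(real m * pi / Lx)\<^sup>2 > 0 \<or> (real n * pi / Ly)\<^sup>2 > 0" using assms by auto
  hence "(real m * pi / Lx)\<^sup>2 + (real n * pi / Ly)\<^sup>2 > 0"
    by (metis add_pos_nonneg add_nonneg_pos zero_le_power2)
  thus ?thesis unfolding wavenum_def by simp
qed

lemma wavenum_tri:
  assumes "Lx > 0" "Ly > 0" "m3 \<le> m1 + m2" "n3 \<le> n1 + n2"
  shows "wavenum Lx Ly m3 n3 \<le> wavenum Lx Ly m1 n1 + wavenum Lx Ly m2 n2"
proof -
  define p1 where "p1 = real m1 * pi / Lx"
  define p2 where "p2 = real m2 * pi / Lx"
  define p3 where "p3 = real m3 * pi / Lx"
  define q1 where "q1 = real n1 * pi / Ly"
  define q2 where "q2 = real n2 * pi / Ly"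
  define q3 where "q3 = real n3 * pi / Ly"
  have nn: "0 \<le> p3" "0 \<le> q3" unfolding p3_def q3_def using assms by auto
  have "real m3 * pi / Lx \<le> real (m1 + m2) * pi / Lx"
    using assms by (intro divide_right_mono mult_right_mono) auto
  hence a: "p3 \<le> p1 + p2" unfolding p1_def p2_def p3_def by (simp add: add_divide_distrib distrib_right)
  have "real n3 * pi / Ly \<le> real (n1 + n2) * pi / Ly"
    using assms by (intro divide_right_mono mult_right_mono) auto
  hence b: "q3 \<le> q1 + q2" unfolding q1_def q2_def q3_def by (simp add: add_divide_distrib distrib_right)
  have "p3\<^sup>2 + q3\<^sup>2 \<le> (p1+p2)\<^sup>2 + (q1+q2)\<^sup>2"
    using a b nn by (intro add_mono power_mono) auto
  hence "sqrt (p3\<^sup>2 + q3\<^sup>2) \<le> sqrt ((p1+p2)\<^sup>2 + (q1+q2)\<^sup>2)" by simp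
  also have "\<dots> = cmod (Complex p1 q1 + Complex p2 q2)" by (simp add: cmod_def)
  also have "\<dots> \<le> cmod (Complex p1 q1) + cmod (Complex p2 q2)" by (rule norm_triangle_ineq)
  also have "\<dots> = sqrt (p1\<^sup>2 + q1\<^sup>2) + sqrt (p2\<^sup>2 + q2\<^sup>2)" by (simp add: cmod_def)
  finally show ?thesis unfolding wavenum_def p1_def p2_def p3_def q1_def q2_def q3_def .
qed

lemma idx_le:
  fixes L :: real assumes "L > 0"
    "integral {0..L} (\<lambda>x. cos (real m1 * pi * x / L) * cos (real m2 * pi * x / L) * cos (real m3 * pi * x / L)) \<noteq> 0"
  shows "m3 \<le> m1 + m2"
  using triple_zero[OF assms(1), of m1 m2 m3] assms(2) by (cases "m3 \<le> m1 + m2") auto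

theorem mainTheorem3:
  fixes Lx Ly :: real
  assumes "Lx > 0" and "Ly > 0"
  shows "\<not> (\<exists>m1 n1 m2 n2 m3 n3 :: nat. \<exists>hc :: real.
            (m1, n1) \<noteq> (0, 0) \<and> (m2, n2) \<noteq> (0, 0) \<and> (m3, n3) \<noteq> (0, 0) \<and>
            hc > 0 \<and>
            integral (box (0, 0) (Lx, Ly))
              (\<lambda>p. Phi Lx Ly m1 n1 p * Phi Lx Ly m2 n2 p * Phi Lx Ly m3 n3 p) \<noteq> 0 \<and>
            omega Lx Ly m1 n1 hc + omega Lx Ly m2 n2 hc = omega Lx Ly m3 n3 hc)"
proof
  assume "\<exists>m1 n1 m2 n2 m3 n3 :: nat. \<exists>hc :: real.
            (m1, n1) \<noteq> (0, 0) \<and> (m2, n2) \<noteq> (0, 0) \<and> (m3, n3) \<noteq> (0, 0) \<and>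
            hc > 0 \<and>
            integral (box (0, 0) (Lx, Ly))
              (\<lambda>p. Phi Lx Ly m1 n1 p * Phi Lx Ly m2 n2 p * Phi Lx Ly m3 n3 p) \<noteq> 0 \<and>
            omega Lx Ly m1 n1 hc + omega Lx Ly m2 n2 hc = omega Lx Ly m3 n3 hc"
  then obtain m1 n1 m2 n2 m3 n3 :: nat and hc :: real where
    nz: "(m1, n1) \<noteq> (0, 0)" "(m2, n2) \<noteq> (0, 0)" "(m3, n3) \<noteq> (0, 0)" and hc: "hc > 0" and
    I: "integral (box (0, 0) (Lx, Ly))
              (\<lambda>p. Phi Lx Ly m1 n1 p * Phi Lx Ly m2 n2 p * Phi Lx Ly m3 n3 p) \<noteq> 0" and
    res: "omega Lx Ly m1 n1 hc + omega Lx Ly m2 n2 hc = omega Lx Ly m3 n3 hc"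
    by blast
  from I[unfolded sep_integral[OF assms]]
  have "m3 \<le> m1 + m2" "n3 \<le> n1 + n2"
    using idx_le[OF assms(1)] idx_le[OF assms(2)] by auto
  hence tri: "wavenum Lx Ly m3 n3 \<le> wavenum Lx Ly m1 n1 + wavenum Lx Ly m2 n2"
    using wavenum_tri[OF assms] by blast
  have om: "omega Lx Ly m n hc = ww hc (wavenum Lx Ly m n)" for m n
    unfolding omega_def ww_def by (simp add: mult.commute)
  have k1: "wavenum Lx Ly m1 n1 > 0" and k2: "wavenum Lx Ly m2 n2 > 0" and k3: "wavenum Lx Ly m3 n3 > 0"
    using wavenum_pos[OF assms] nz by auto
  have "omega Lx Ly m3 n3 hc \<le> ww hc (wavenum Lx Ly m1 n1 + wavenum Lx Ly m2 n2)"
    unfolding om using ww_mono[OF hc] k3 tri by simp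
  also have "\<dots> < omega Lx Ly m1 n1 hc + omega Lx Ly m2 n2 hc"
    unfolding om using ww_subadd[OF hc k1 k2] .
  finally show False using res by simp
qed

end
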